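(* There is an absolute constant $C>0$ such that for all positive integers $n,d$ and every nonempty family $E$ of subsets of $[n]$, each of size at most $d$, there exists a three-stage group testing algorithm that finds the defective hyperedge in $E$ and uses at most $C\left(\sqrt d\,\log|E|+d\right)$ tests.
   Context: Group testing on a hypergraph: items are $[n]=\{1,\dots,n\}$, $E$ is a family of subsets of $[n]$ (hyperedges), exactly one $e^*\in E$ is defective (unknown); a test on a pool $T\subseteq[n]$ is positive iff $T\cap e^*\neq\emptyset$. A three-stage algorithm consists of three stages, each a non-adaptive set of tests performed in parallel: the stage-1 pools are fixed in advance, the stage-2 pools are determined by the stage-1 responses, and the stage-3 pools by the stage-1 and stage-2 responses. It finds the defective hyperedge iff for any two distinct $e^*,f\in E$ the sequences of all responses obtained when $e^*$ is defective and when $f$ is defective differ. The number of tests is the maximum over $e^*\in E$ of the total number of pools tested. Logarithms to a fixed base. *)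

theory Defs
  imports Complex_Main
begin

text \<open>Items are 1..n; a pool is a set of items; a stage is a list of pools
  tested in parallel. The response to pool T when e is defective is
  whether T meets e.\<close>

definition responses :: "nat set list \<Rightarrow> nat set \<Rightarrow> bool list" where
  "responses Ts e = map (\<lambda>T. T \<inter> e \<noteq> {}) Ts"

text \<open>A three-stage algorithm: fixed stage-1 pools P1, stage-2 pools P2 r1
  depending on stage-1 responses, stage-3 pools P3 r1 r2 depending on both.\<close>

definition outcome ::
  "nat set list \<Rightarrow> (bool list \<Rightarrow> nat set list) \<Rightarrow> (bool list \<Rightarrow> bool list \<Rightarrow> nat set list)
   \<Rightarrow> nat set \<Rightarrow> bool list \<times> bool list \<times> bool list" where
  "outcome P1 P2 P3 e =
     (let r1 = responses P1 e; r2 = responses (P2 r1) e; r3 = responses (P3 r1 r2) e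
      in (r1, r2, r3))"

definition valid_three_stage ::
  "nat \<Rightarrow> nat set list \<Rightarrow> (bool list \<Rightarrow> nat set list) \<Rightarrow> (bool list \<Rightarrow> bool list \<Rightarrow> nat set list)
   \<Rightarrow> bool" where
  "valid_three_stage n P1 P2 P3 \<longleftrightarrow>
     (\<forall>T\<in>set P1. T \<subseteq> {1..n}) \<and>
     (\<forall>r1. \<forall>T\<in>set (P2 r1). T \<subseteq> {1..n}) \<and>
     (\<forall>r1 r2. \<forall>T\<in>set (P3 r1 r2). T \<subseteq> {1..n})"

definition finds_defective ::
  "nat set set \<Rightarrow> nat set list \<Rightarrow> (bool list \<Rightarrow> nat set list) \<Rightarrow> (bool list \<Rightarrow> bool list \<Rightarrow> nat set list)
   \<Rightarrow> bool" where
  "finds_defective E P1 P2 P3 \<longleftrightarrow> inj_on (outcome P1 P2 P3) E"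

definition tests_used ::
  "nat set list \<Rightarrow> (bool list \<Rightarrow> nat set list) \<Rightarrow> (bool list \<Rightarrow> bool list \<Rightarrow> nat set list)
   \<Rightarrow> nat set \<Rightarrow> nat" where
  "tests_used P1 P2 P3 e =
     (let r1 = responses P1 e; r2 = responses (P2 r1) e
      in length P1 + length (P2 r1) + length (P3 r1 r2))"

definition num_tests ::
  "nat set set \<Rightarrow> nat set list \<Rightarrow> (bool list \<Rightarrow> nat set list) \<Rightarrow> (bool list \<Rightarrow> bool list \<Rightarrow> nat set list)
   \<Rightarrow> nat" where
  "num_tests E P1 P2 P3 = Max (tests_used P1 P2 P3 ` E)"

end

theory Submission
  imports Defs "HOL-Library.FuncSet"
begin


definition tst :: "nat set \<Rightarrow> (nat \<Rightarrow> nat) \<Rightarrow> nat set" where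
  "tst V h = {x\<in>V. h x = 0}"
definition FN :: "nat set \<Rightarrow> nat \<Rightarrow> (nat \<Rightarrow> nat) set" where
  "FN V q = PiE V (\<lambda>_. {..<q})"
definition GD :: "nat set \<Rightarrow> nat \<Rightarrow> nat set \<Rightarrow> nat set \<Rightarrow> (nat \<Rightarrow> nat) set" where
  "GD V q A B = {h\<in>FN V q. (tst V h \<inter> A \<noteq> {}) \<noteq> (tst V h \<inter> B \<noteq> {})}"

lemma multi:
  fixes Fn :: "'f set" and G :: "'p \<Rightarrow> 'f set"
  assumes fin: "finite Fn" "finite P" and sub: "\<forall>p\<in>P. G p \<subseteq> Fn"
    and bd: "\<forall>p\<in>P. real (card (Fn - G p)) \<le> \<beta>"
    and lt: "real (card P) * \<beta>^k < real (card Fn)^k"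
  shows "\<exists>H. (\<forall>i<k. H i \<in> Fn) \<and> (\<forall>p\<in>P. \<exists>i<k. H i \<in> G p)"
proof -
  let ?D = "PiE {..<k} (\<lambda>_. Fn)"
  let ?B = "\<lambda>p. PiE {..<k} (\<lambda>_. Fn - G p)"
  have cD: "card ?D = card Fn ^ k" by (simp add: card_PiE)
  have cB: "real (card (?B p)) \<le> \<beta>^k" if "p \<in> P" for p
  proof -
    have "card (?B p) = card (Fn - G p) ^ k" by (simp add: card_PiE)
    then have "real (card (?B p)) = real (card (Fn - G p)) ^ k" by simp
    also have "\<dots> \<le> \<beta>^k" using bd that by (intro power_mono) auto
    finally show ?thesis .
  qed
  have "real (card (\<Union>p\<in>P. ?B p)) \<le> real (\<Sum>p\<in>P. card (?B p))"
    by (rule of_nat_mono[OF card_UN_le[OF fin(2)]])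
  also have "\<dots> = (\<Sum>p\<in>P. real (card (?B p)))" by simp
  also have "\<dots> \<le> (\<Sum>p\<in>P. \<beta>^k)" using cB by (intro sum_mono) auto
  also have "\<dots> = real (card P) * \<beta>^k" by simp
  also have "\<dots> < real (card ?D)" using lt cD by simp
  finally have "card (\<Union>p\<in>P. ?B p) < card ?D" by linarith
  moreover have "finite (\<Union>p\<in>P. ?B p)"
    using fin by (intro finite_UN_I) (auto intro: finite_PiE)
  ultimately have "\<not> ?D \<subseteq> (\<Union>p\<in>P. ?B p)"
    using card_mono leD by blast
  then obtain H where H: "H \<in> ?D" "H \<notin> (\<Union>p\<in>P. ?B p)" by blast
  show ?thesis
  proof (intro exI[of _ H] conjI allI impI ballI)
    fix i assume "i < k" then show "H i \<in> Fn" using H by auto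
  next
    fix p assume p: "p \<in> P"
    show "\<exists>i<k. H i \<in> G p"
    proof (rule ccontr)
      assume "\<not> ?thesis"
      then have "\<forall>i\<in>{..<k}. H i \<in> Fn - G p" using H(1) by (auto simp: PiE_iff)
      moreover have "H \<in> extensional {..<k}" using H(1) by (simp add: PiE_iff)
      ultimately have "H \<in> ?B p" by (simp add: PiE_iff)
      then show False using H(2) p by blast
    qed
  qed
qed

lemma single_count:
  assumes "finite V" "A \<subseteq> V" "B \<subseteq> V" "x \<in> (A - B) \<union> (B - A)" "q \<ge> 1"
  shows "card (PiE V (\<lambda>y. if y = x then {0} else if y \<in> A \<union> B then {1..<q} else {..<q}))
       = (q-1)^(card (A\<union>B) - 1) * q^(card V - card (A\<union>B))"
proof -
  have fAB: "finite (A \<union> B)" using assms finite_subset by blast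
  have "card (PiE V (\<lambda>y. if y = x then {0} else if y \<in> A \<union> B then {1..<q} else {..<q}))
     = (\<Prod>y\<in>V. card (if y = x then {0} else if y \<in> A \<union> B then {1..<q} else {..<q}))"
    using assms(1) by (simp add: card_PiE)
  also have "\<dots> = (\<Prod>y\<in>V. (if y = x then 1 else if y \<in> A \<union> B then q - 1 else q))"
    by (intro prod.cong) auto
  also have "\<dots> = (\<Prod>y\<in>A\<union>B. (if y = x then 1 else if y \<in> A \<union> B then q - 1 else q)) *
       (\<Prod>y\<in>V - (A\<union>B). (if y = x then 1 else if y \<in> A \<union> B then q - 1 else q))"
    using assms by (subst prod.subset_diff[of "A \<union> B" V]) (auto simp: mult.commute)
  also have "(\<Prod>y\<in>V - (A\<union>B). (if y = x then 1 else if y \<in> A \<union> B then q - 1 else q)) = q^(card V - card (A\<union>B))"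
  proof -
    have "(\<Prod>y\<in>V - (A\<union>B). (if y = x then 1 else if y \<in> A \<union> B then q - 1 else q)) = (\<Prod>y\<in>V - (A\<union>B). q)"
      using assms(4) by (intro prod.cong) auto
    also have "\<dots> = q^(card V - card (A\<union>B))"
      using assms fAB by (simp add: card_Diff_subset)
    finally show ?thesis .
  qed
  also have "(\<Prod>y\<in>A\<union>B. (if y = x then 1 else if y \<in> A \<union> B then q - 1 else q)) = (q-1)^(card (A\<union>B) - 1)"
  proof -
    have xin: "x \<in> A \<union> B" using assms(4) by blast
    have "(\<Prod>y\<in>A\<union>B. (if y = x then 1 else if y \<in> A \<union> B then q - 1 else q))
       = (if x = x then 1 else if x \<in> A \<union> B then q - 1 else q) * (\<Prod>y\<in>(A\<union>B) - {x}. (if y = x then 1 else if y \<in> A \<union> B then q - 1 else q))"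
      using fAB xin by (rule prod.remove)
    also have "(\<Prod>y\<in>(A\<union>B) - {x}. (if y = x then 1 else if y \<in> A \<union> B then q - 1 else q)) = (\<Prod>y\<in>(A\<union>B) - {x}. q - 1)"
      by (intro prod.cong) auto
    finally show ?thesis using fAB xin by simp
  qed
  finally show ?thesis by simp
qed

lemma gd_card:
  assumes fV: "finite V" and AB: "A \<subseteq> V" "B \<subseteq> V" and q: "q \<ge> 1"
  shows "card ((A - B) \<union> (B - A)) * ((q-1)^(card (A\<union>B) - 1) * q^(card V - card (A\<union>B))) \<le> card (GD V q A B)"
proof -
  define S where "S = (\<lambda>x. PiE V (\<lambda>y. if y = x then {0} else if y \<in> A \<union> B then {1..<q} else {..<q}))"
  let ?X = "(A - B) \<union> (B - A)"
  have fX: "finite ?X" using fV AB finite_subset by blast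
  have sub: "S x \<subseteq> GD V q A B" if x: "x \<in> ?X" for x
  proof
    fix h assume h: "h \<in> S x"
    have xV: "x \<in> V" using x AB by auto
    have hm: "h y \<in> (if y = x then {0} else if y \<in> A \<union> B then {1..<q} else {..<q})" if "y \<in> V" for y
      using h that unfolding S_def by (rule PiE_mem)
    have hlt: "h y < q" if "y \<in> V" for y
      using hm[OF that] q by (auto split: if_splits)
    have "h \<in> extensional V" using h unfolding S_def PiE_def by blast
    then have hF: "h \<in> FN V q" using hlt unfolding FN_def by (simp add: PiE_iff)
    have hx: "h x = 0" using hm[OF xV] by simp
    have hy: "h y \<noteq> 0" if "y \<in> A \<union> B" "y \<noteq> x" for y
      using hm[of y] that AB by auto
    then have xt: "x \<in> tst V h" using hx xV by (simp add: tst_def)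
    have tsub: "tst V h \<inter> (A \<union> B) \<subseteq> {x}" unfolding tst_def using hy by blast
    have tA: "(tst V h \<inter> A \<noteq> {}) = (x \<in> A)" using tsub xt by blast
    have tB: "(tst V h \<inter> B \<noteq> {}) = (x \<in> B)" using tsub xt by blast
    have "(x \<in> A) \<noteq> (x \<in> B)" using x by blast
    then show "h \<in> GD V q A B" using hF tA tB unfolding GD_def by simp
  qed
  have disj: "S x \<inter> S y = {}" if "x \<in> ?X" "y \<in> ?X" "x \<noteq> y" for x y
  proof -
    { fix h assume "h \<in> S x" "h \<in> S y"
      have xV: "x \<in> V" using that AB by auto
      have "h x \<in> (if x = x then {0} else if x \<in> A \<union> B then {1..<q} else {..<q})"
        using \<open>h \<in> S x\<close> xV unfolding S_def by (rule PiE_mem)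
      moreover have "h x \<in> (if x = y then {0} else if x \<in> A \<union> B then {1..<q} else {..<q})"
        using \<open>h \<in> S y\<close> xV unfolding S_def by (rule PiE_mem)
      ultimately have "h x = 0" "h x \<in> {1..<q}" using that by auto
      then have False by auto }
    then show ?thesis by blast
  qed
  have fS: "finite (S x)" for x unfolding S_def using fV by (intro finite_PiE) auto
  have "card (\<Union>x\<in>?X. S x) = (\<Sum>x\<in>?X. card (S x))"
    using fX fS disj by (intro card_UN_disjoint) auto
  also have "\<dots> = (\<Sum>x\<in>?X. (q-1)^(card (A\<union>B) - 1) * q^(card V - card (A\<union>B)))"
    using single_count[OF fV AB _ q] unfolding S_def by (intro sum.cong) auto
  also have "\<dots> = card ?X * ((q-1)^(card (A\<union>B) - 1) * q^(card V - card (A\<union>B)))" by simp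
  finally have eq: "card (\<Union>x\<in>?X. S x) = card ?X * ((q-1)^(card (A\<union>B) - 1) * q^(card V - card (A\<union>B)))" .
  have fFN: "finite (FN V q)" unfolding FN_def using fV by (intro finite_PiE) auto
  have "GD V q A B \<subseteq> FN V q" unfolding GD_def by blast
  then have fG: "finite (GD V q A B)" using fFN finite_subset by blast
  have le: "card (\<Union>x\<in>?X. S x) \<le> card (GD V q A B)" using sub fG by (intro card_mono) blast+
  show ?thesis using le unfolding eq .
qed



lemma ratio:
  fixes r w :: nat
  assumes "r \<ge> 1" "1 \<le> w" "w \<le> 2*r"
  shows "exp (-2) / real r \<le> real r^(w-1) / (real r+1)^w"
proof -
  have rp: "real r > 0" using assms by simp
  have e1: "(1 + 1 / real r)^r \<le> exp 1" using exp_ge_one_plus_x_over_n_power_n[of r 1] assms by simp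
  have base: "real r / (real r + 1) = 1 / (1 + 1/real r)" using rp by (simp add: field_simps)
  have b0: "0 \<le> real r / (real r + 1)" "real r / (real r + 1) \<le> 1" using rp by auto
  have pos: "(1 + 1 / real r)^r > 0" using rp by (intro zero_less_power) (simp add: add_pos_nonneg)
  have "1 / exp 1 \<le> 1 / (1 + 1/real r)^r" using e1 pos by (intro divide_left_mono) auto
  also have "\<dots> = (real r / (real r + 1))^r" by (simp add: base power_divide)
  finally have h1: "exp (-1) \<le> (real r / (real r + 1))^r" by (simp add: exp_minus field_simps)
  have "exp (-2::real) = exp (-1) * exp (-1)" by (simp flip: exp_add)
  also have "\<dots> \<le> (real r / (real r + 1))^r * (real r / (real r + 1))^r"
    using h1 by (intro mult_mono) auto
  also have "\<dots> = (real r / (real r + 1))^(2*r)" by (simp add: power_add[symmetric] mult_2)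
  also have "\<dots> \<le> (real r / (real r + 1))^w" using b0 assms by (intro power_decreasing) auto
  finally have h2: "exp (-2) \<le> (real r / (real r + 1))^w" .
  have "real r^(w-1) / (real r+1)^w = (real r / (real r + 1))^w / real r"
  proof -
    have "real r^w = real r * real r^(w-1)" using assms by (metis Suc_diff_1 less_le_trans power_Suc zero_less_one)
    then show ?thesis using rp by (simp add: power_divide field_simps)
  qed
  then show ?thesis using h2 rp by (simp add: divide_right_mono)
qed



lemma card_FN: "finite V \<Longrightarrow> card (FN V q) = q ^ card V"
  unfolding FN_def by (simp add: card_PiE)

lemma gd_frac:
  assumes fV: "finite V" and AB: "A \<subseteq> V" "B \<subseteq> V" and r: "r \<ge> 1"
    and w2: "card (A \<union> B) \<le> 2*r" and ne: "A \<noteq> B"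
  shows "real (card (FN V (r+1) - GD V (r+1) A B))
     \<le> (1 - real (card ((A-B) \<union> (B-A))) * exp (-2) / real r) * real (card (FN V (r+1)))"
proof -
  let ?w = "card (A \<union> B)" and ?X = "real (card ((A-B) \<union> (B-A)))" and ?M = "real (card (FN V (r+1)))"
  have fAB: "finite (A \<union> B)" using fV AB finite_subset by blast
  have "A \<union> B \<noteq> {}" using ne by blast
  then have w1: "?w \<ge> 1" using fAB by (simp add: Suc_leI card_gt_0_iff)
  have wV: "?w \<le> card V" using AB fV by (intro card_mono) auto
  have sub: "GD V (r+1) A B \<subseteq> FN V (r+1)" unfolding GD_def by blast
  have fFN: "finite (FN V (r+1))" unfolding FN_def using fV by (intro finite_PiE) auto
  have cd: "card (FN V (r+1) - GD V (r+1) A B) = card (FN V (r+1)) - card (GD V (r+1) A B)"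
    using sub fFN finite_subset by (intro card_Diff_subset) auto
  have le: "card (GD V (r+1) A B) \<le> card (FN V (r+1))" using sub fFN by (intro card_mono)
  have gc: "card ((A - B) \<union> (B - A)) * (r^(?w - 1) * (r+1)^(card V - ?w)) \<le> card (GD V (r+1) A B)"
    using gd_card[OF fV AB, of "r+1"] by simp
  have M: "?M = (real r + 1)^card V" using card_FN[OF fV] by (simp add: add.commute)
  have rat: "exp (-2) / real r \<le> real r^(?w-1) / (real r+1)^?w" using ratio[OF r w1] w2 by simp
  have "(real r + 1)^card V = (real r + 1)^?w * (real r+1)^(card V - ?w)"
    using wV by (simp flip: power_add)
  then have eq2: "real r^(?w-1) * (real r+1)^(card V - ?w) = (real r^(?w-1) / (real r+1)^?w) * ?M"
    using M by (simp add: field_simps)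
  have "?X * (exp (-2) / real r) * ?M \<le> ?X * (real r^(?w-1) / (real r+1)^?w) * ?M"
    using rat by (intro mult_right_mono mult_left_mono) auto
  also have "\<dots> = ?X * (real r^(?w-1) * (real r+1)^(card V - ?w))" using eq2 by simp
  also have "\<dots> = real (card ((A - B) \<union> (B - A)) * (r^(?w - 1) * (r+1)^(card V - ?w)))" by (simp add: add.commute)
  also have "\<dots> \<le> real (card (GD V (r+1) A B))" using gc of_nat_mono by blast
  finally have "?X * (exp (-2) / real r) * ?M \<le> real (card (GD V (r+1) A B))" .
  then show ?thesis using cd le by (simp add: of_nat_diff algebra_simps)
qed

lemma kchoice:
  fixes m :: nat and \<delta> P :: real
  assumes m: "m \<ge> 1" and d: "0 < \<delta>" "\<delta> \<le> 1" and P: "P \<le> real m^2" "0 \<le> P"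
  defines "k \<equiv> nat \<lfloor>2 * ln (real m) / \<delta>\<rfloor> + 1"
  shows "P * (1-\<delta>)^k < 1" "real k \<le> 2 * ln (real m) / \<delta> + 1"
proof -
  have lnm: "ln (real m) \<ge> 0" using m by simp
  have x0: "2 * ln (real m) / \<delta> \<ge> 0" using lnm d by simp
  have kr: "real k = real (nat \<lfloor>2 * ln (real m) / \<delta>\<rfloor>) + 1" unfolding k_def by simp
  have fl: "real (nat \<lfloor>2 * ln (real m) / \<delta>\<rfloor>) = of_int \<lfloor>2 * ln (real m) / \<delta>\<rfloor>" using x0 by simp
  have k1: "real k > 2 * ln (real m) / \<delta>" using kr fl by linarith
  show "real k \<le> 2 * ln (real m) / \<delta> + 1" using kr fl by linarith
  have "\<delta> * real k > 2 * ln (real m)" using k1 d by (simp add: field_simps)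
  have "(1-\<delta>)^k \<le> exp (-\<delta>)^k" using d by (intro power_mono) (auto simp: exp_ge_add_one_self[of "-\<delta>", simplified])
  also have "\<dots> = exp (-\<delta> * real k)" by (simp add: exp_of_nat_mult[symmetric] mult.commute)
  also have "\<dots> < exp (- 2 * ln (real m))" using \<open>\<delta> * real k > 2 * ln (real m)\<close> by simp
  also have "\<dots> = 1 / real m^2"
  proof -
    have "exp (2 * ln (real m)) = exp (ln (real m)) ^ 2" using exp_of_nat_mult[of 2 "ln (real m)"] by simp
    also have "\<dots> = real m ^ 2" using m by simp
    finally show ?thesis by (simp add: exp_minus field_simps)
  qed
  finally have "(1-\<delta>)^k < 1 / real m^2" .
  have pk: "(1-\<delta>)^k \<ge> 0" using d by simp
  have mp: "real m^2 > 0" using m by simp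
  have "P * (1-\<delta>)^k \<le> real m^2 * (1-\<delta>)^k" using P pk by (intro mult_right_mono) auto
  also have "\<dots> < real m^2 * (1 / real m^2)" using mp \<open>(1-\<delta>)^k < 1 / real m^2\<close> by (intro mult_strict_left_mono) auto
  also have "\<dots> = 1" using mp by simp
  finally show "P * (1-\<delta>)^k < 1" .
qed



lemma design:
  fixes Pairs :: "'a set" and SA SB :: "'a \<Rightarrow> nat set" and V :: "nat set" and a :: real
  assumes fV: "finite V" and fP: "finite Pairs" and r: "r \<ge> 1" and m: "m \<ge> 1"
    and cP: "real (card Pairs) \<le> real m^2"
    and pp: "\<And>p. p \<in> Pairs \<Longrightarrow> SA p \<subseteq> V \<and> SB p \<subseteq> V \<and> SA p \<noteq> SB p \<and> card (SA p \<union> SB p) \<le> 2*r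
              \<and> a \<le> real (card ((SA p - SB p) \<union> (SB p - SA p)))"
    and d: "0 < a * exp (-2) / real r" "a * exp (-2) / real r \<le> 1"
  shows "\<exists>Ts. real (length Ts) \<le> 2 * ln (real m) / (a * exp (-2) / real r) + 1 \<and> (\<forall>T\<in>set Ts. T \<subseteq> V) \<and>
           (\<forall>p\<in>Pairs. \<exists>T\<in>set Ts. (T \<inter> SA p \<noteq> {}) \<noteq> (T \<inter> SB p \<noteq> {}))"
proof -
  define \<delta> where "\<delta> = a * exp (-2) / real r"
  define k where "k = nat \<lfloor>2 * ln (real m) / \<delta>\<rfloor> + 1"
  have d': "0 < \<delta>" "\<delta> \<le> 1" using d unfolding \<delta>_def by auto
  have kc: "real (card Pairs) * (1-\<delta>)^k < 1" "real k \<le> 2 * ln (real m) / \<delta> + 1"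
    using kchoice[OF m d' cP] unfolding k_def by auto
  let ?Fn = "FN V (r+1)" and ?G = "\<lambda>p. GD V (r+1) (SA p) (SB p)"
  define M where "M = real (card ?Fn)"
  have Mpos: "M > 0" unfolding M_def using card_FN[OF fV] by simp
  have fFn: "finite ?Fn" unfolding FN_def using fV by (intro finite_PiE) auto
  have sub: "\<forall>p\<in>Pairs. ?G p \<subseteq> ?Fn" unfolding GD_def by blast
  have bd: "\<forall>p\<in>Pairs. real (card (?Fn - ?G p)) \<le> (1-\<delta>) * M"
  proof
    fix p assume p: "p \<in> Pairs"
    note pp' = pp[OF p]
    have "real (card (?Fn - ?G p)) \<le> (1 - real (card ((SA p - SB p) \<union> (SB p - SA p))) * exp (-2) / real r) * M"
      unfolding M_def using pp' by (intro gd_frac[OF fV _ _ r]) auto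
    also have "\<dots> \<le> (1-\<delta>) * M"
    proof -
      have "a * exp (-2) / real r \<le> real (card ((SA p - SB p) \<union> (SB p - SA p))) * exp (-2) / real r"
        using pp' r by (intro divide_right_mono mult_right_mono) auto
      then show ?thesis using Mpos unfolding \<delta>_def by (intro mult_right_mono) auto
    qed
    finally show "real (card (?Fn - ?G p)) \<le> (1-\<delta>) * M" .
  qed
  have lt: "real (card Pairs) * ((1-\<delta>) * M)^k < M^k"
  proof -
    have "real (card Pairs) * ((1-\<delta>) * M)^k = (real (card Pairs) * (1-\<delta>)^k) * M^k"
      by (simp add: power_mult_distrib)
    also have "\<dots> < 1 * M^k" using kc(1) Mpos by (intro mult_strict_right_mono) auto
    finally show ?thesis by simp
  qed
  obtain H where H: "\<forall>i<k. H i \<in> ?Fn" "\<forall>p\<in>Pairs. \<exists>i<k. H i \<in> ?G p"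
    using multi[OF fFn fP sub bd, of k] lt unfolding M_def by blast
  define Ts where "Ts = map (\<lambda>i. tst V (H i)) [0..<k]"
  have "real (length Ts) \<le> 2 * ln (real m) / \<delta> + 1" using kc(2) unfolding Ts_def by simp
  moreover have "\<forall>T\<in>set Ts. T \<subseteq> V" unfolding Ts_def tst_def by auto
  moreover have "\<forall>p\<in>Pairs. \<exists>T\<in>set Ts. (T \<inter> SA p \<noteq> {}) \<noteq> (T \<inter> SB p \<noteq> {})"
  proof
    fix p assume "p \<in> Pairs"
    then obtain i where i: "i < k" "H i \<in> ?G p" using H by blast
    then have "tst V (H i) \<in> set Ts" unfolding Ts_def by auto
    moreover have "(tst V (H i) \<inter> SA p \<noteq> {}) \<noteq> (tst V (H i) \<inter> SB p \<noteq> {})" using i(2) unfolding GD_def by blast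
    ultimately show "\<exists>T\<in>set Ts. (T \<inter> SA p \<noteq> {}) \<noteq> (T \<inter> SB p \<noteq> {})" by blast
  qed
  ultimately show ?thesis unfolding \<delta>_def by blast
qed

lemma arith_final:
  fixes d t lm L K1 K2 :: real
  assumes d: "d \<ge> 1" and t: "sqrt d \<le> t" "t \<le> sqrt d + 1" and lm: "lm \<ge> 0" "lm \<le> L"
    and K1: "K1 \<le> 2 * lm / (t * exp (-2) / d) + 1" and K2: "K2 \<le> d + (2 * lm / (1 * exp (-2) / t) + 1)"
  shows "K1 + K2 \<le> (6 * exp 2 + 3) * (sqrt d * L + d)"
proof -
  have sd: "sqrt d \<ge> 1" using d by simp
  have tp: "t > 0" using sd t by linarith
  have e: "exp (-2::real) = 1 / exp 2" by (simp add: exp_minus field_simps)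
  have E: "exp (2::real) > 0" by simp
  have dt: "d / t \<le> sqrt d"
  proof -
    have ts: "0 < t * sqrt d" using tp sd by simp
    have "d / t \<le> d / sqrt d" by (rule divide_left_mono[OF t(1)]) (use d ts in simp_all)
    also have "\<dots> = sqrt d" using d by (intro real_div_sqrt) simp
    finally show ?thesis .
  qed
  have t2: "t \<le> 2 * sqrt d" using t sd by linarith
  have k1: "2 * lm / (t * exp (-2) / d) = 2 * lm * exp 2 * (d / t)" using tp d by (simp add: e field_simps)
  have k2: "2 * lm / (1 * exp (-2) / t) = 2 * lm * exp 2 * t" using tp by (simp add: e field_simps)
  have c0: "2 * lm * exp 2 \<ge> 0" using lm by simp
  have "K1 + K2 \<le> 2 * lm * exp 2 * (d / t) + 2 * lm * exp 2 * t + 2 + d" using K1 K2 k1 k2 by linarith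
  also have "\<dots> \<le> 2 * lm * exp 2 * sqrt d + 2 * lm * exp 2 * (2 * sqrt d) + 2 + d"
    using dt t2 c0 by (intro add_mono mult_left_mono) auto
  also have "\<dots> = 6 * exp 2 * (lm * sqrt d) + 2 + d" by (simp add: algebra_simps)
  also have "\<dots> \<le> 6 * exp 2 * (L * sqrt d) + 3 * d"
  proof -
    have "lm * sqrt d \<le> L * sqrt d" using lm sd by (intro mult_right_mono) auto
    then have "6 * exp 2 * (lm * sqrt d) \<le> 6 * exp 2 * (L * sqrt d)" by simp
    then show ?thesis using d by linarith
  qed
  also have "\<dots> \<le> (6 * exp 2 + 3) * (sqrt d * L + d)"
  proof -
    have "L * sqrt d \<ge> 0" using lm sd by simp
    then show ?thesis using d by (simp add: algebra_simps)
  qed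
  finally show ?thesis .
qed



lemma resp_eq: "responses Ts e = responses Ts f \<Longrightarrow> T \<in> set Ts \<Longrightarrow> (T \<inter> e \<noteq> {}) = (T \<inter> f \<noteq> {})"
  unfolding responses_def map_eq_conv by blast

lemma main:
  assumes d: "d > 0" and Ene: "E \<noteq> {}" and EP: "E \<subseteq> Pow {1..n}" and cdE: "\<forall>e\<in>E. card e \<le> d"
  shows "\<exists>P1 P2 P3. valid_three_stage n P1 P2 P3 \<and> finds_defective E P1 P2 P3 \<and>
     real (num_tests E P1 P2 P3) \<le> (6 * exp 2 + 3) * (sqrt (real d) * log 2 (real (card E)) + real d)"
proof -
  define V where "V = {1..n::nat}"
  have fV: "finite V" unfolding V_def by simp
  have fE: "finite E" using EP finite_subset by (metis finite_Pow_iff finite_atLeastAtMost)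
  define m where "m = card E"
  have m1: "m \<ge> 1" using fE Ene unfolding m_def by (simp add: Suc_leI card_gt_0_iff)
  have eV: "e \<subseteq> V" if "e \<in> E" for e using EP that unfolding V_def by blast
  have fin_e: "finite e" if "e \<in> E" for e using eV[OF that] fV finite_subset by blast
  have cE: "card (E \<times> E) = m^2" unfolding m_def by (simp add: card_cartesian_product power2_eq_square)
  define t where "t = nat \<lceil>sqrt (real d)\<rceil>"
  have d1: "real d \<ge> 1" using d by simp
  have sd1: "sqrt (real d) \<ge> 1" using d1 by simp
  have tr: "real t = of_int \<lceil>sqrt (real d)\<rceil>" unfolding t_def using sd1 by simp
  have t_lo: "sqrt (real d) \<le> real t" using tr le_of_int_ceiling by simp
  have t_hi: "real t \<le> sqrt (real d) + 1" using tr of_int_ceiling_le_add_one by simp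
  have t1: "t \<ge> 1" using t_lo sd1 by linarith
  have "sqrt (real d) \<le> real d"
  proof -
    have "sqrt (real d) * 1 \<le> sqrt (real d) * sqrt (real d)" using sd1 by (intro mult_left_mono) auto
    moreover have "sqrt (real d) * sqrt (real d) = real d" using d1 by simp
    ultimately show ?thesis by linarith
  qed
  then have "\<lceil>sqrt (real d)\<rceil> \<le> int d" by (simp add: ceiling_le_iff)
  then have td: "t \<le> d" unfolding t_def using nat_le_iff by blast
  have e2: "exp (-2::real) \<le> 1" "exp (-2::real) > 0" by auto
  define Pairs1 where "Pairs1 = {p \<in> E \<times> E. t \<le> card ((fst p - snd p) \<union> (snd p - fst p))}"
  have P1sub: "Pairs1 \<subseteq> E \<times> E" unfolding Pairs1_def by blast
  have fP1: "finite Pairs1" using P1sub fE finite_subset by blast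
  have cP1: "real (card Pairs1) \<le> real m^2"
  proof -
    have "card Pairs1 \<le> card (E \<times> E)" using P1sub fE by (intro card_mono) auto
    then show ?thesis using cE by (metis of_nat_le_iff of_nat_power)
  qed
  have pp1: "fst p \<subseteq> V \<and> snd p \<subseteq> V \<and> fst p \<noteq> snd p \<and> card (fst p \<union> snd p) \<le> 2*d
              \<and> real t \<le> real (card ((fst p - snd p) \<union> (snd p - fst p)))" if p: "p \<in> Pairs1" for p
  proof -
    have pe: "fst p \<in> E" "snd p \<in> E" "t \<le> card ((fst p - snd p) \<union> (snd p - fst p))" using p unfolding Pairs1_def by auto
    have "fst p \<noteq> snd p" using pe(3) t1 by auto
    moreover have "card (fst p \<union> snd p) \<le> 2*d"
    proof -
      have "card (fst p \<union> snd p) \<le> card (fst p) + card (snd p)" by (rule card_Un_le)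
      moreover have "card (fst p) \<le> d" "card (snd p) \<le> d" using cdE pe by auto
      ultimately show ?thesis by linarith
    qed
    ultimately show ?thesis using pe eV by auto
  qed
  have dl1: "0 < real t * exp (-2) / real d" "real t * exp (-2) / real d \<le> 1"
  proof -
    show "0 < real t * exp (-2) / real d" using t1 d by simp
    have "real t * exp (-2) \<le> real t * 1" using e2 by (intro mult_left_mono) auto
    also have "\<dots> \<le> real d" using td by simp
    finally show "real t * exp (-2) / real d \<le> 1" using d by simp
  qed
  obtain P1 where P1: "real (length P1) \<le> 2 * ln (real m) / (real t * exp (-2) / real d) + 1"
      "\<forall>T\<in>set P1. T \<subseteq> V" "\<forall>p\<in>Pairs1. \<exists>T\<in>set P1. (T \<inter> fst p \<noteq> {}) \<noteq> (T \<inter> snd p \<noteq> {})"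
    using design[where SA=fst and SB=snd and a="real t" and r=d and V=V and Pairs=Pairs1, OF fV fP1 _ m1 cP1 pp1 dl1] d
    by (metis One_nat_def Suc_leI)
  have S1: "card ((e - f) \<union> (f - e)) < t" if "e \<in> E" "f \<in> E" "responses P1 e = responses P1 f" for e f
  proof (rule ccontr)
    assume "\<not> ?thesis"
    then have "(e, f) \<in> Pairs1" using that unfolding Pairs1_def by auto
    then obtain T where "T \<in> set P1" "(T \<inter> e \<noteq> {}) \<noteq> (T \<inter> f \<noteq> {})" using P1(3) by fastforce
    then show False using resp_eq[OF that(3)] by blast
  qed
  define F where "F r1 = {f \<in> E. responses P1 f = r1}" for r1
  have lnm: "ln (real m) \<ge> 0" using m1 by simp
  have st2: "\<forall>r1. \<exists>L. (\<forall>T\<in>set L. T \<subseteq> V) \<and> real (length L) \<le> real d + (2 * ln (real m) / (1 * exp (-2) / real t) + 1)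
     \<and> (\<forall>f\<in>F r1. \<forall>g\<in>F r1. responses L f = responses L g \<longrightarrow> f = g)"
  proof
    fix r1
    show "\<exists>L. (\<forall>T\<in>set L. T \<subseteq> V) \<and> real (length L) \<le> real d + (2 * ln (real m) / (1 * exp (-2) / real t) + 1)
     \<and> (\<forall>f\<in>F r1. \<forall>g\<in>F r1. responses L f = responses L g \<longrightarrow> f = g)"
    proof (cases "F r1 = {}")
      case True
      have "0 \<le> 2 * ln (real m) / (1 * exp (-2) / real t)" using lnm t1 by simp
      then show ?thesis using True by (intro exI[of _ "[]"]) auto
    next
      case False
      then obtain f0 where f0: "f0 \<in> F r1" by blast
      have f0E: "f0 \<in> E" using f0 unfolding F_def by simp
      have close: "card (f - f0) < t" if "f \<in> F r1" for f
      proof -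
        have fE': "f \<in> E" using that unfolding F_def by simp
        have "responses P1 f = responses P1 f0" using that f0 unfolding F_def by simp
        then have "card ((f - f0) \<union> (f0 - f)) < t" using S1 fE' f0E by blast
        moreover have "card (f - f0) \<le> card ((f - f0) \<union> (f0 - f))"
          using fin_e[OF fE'] fin_e[OF f0E] by (intro card_mono) auto
        ultimately show ?thesis by simp
      qed
      define Pairs2 where "Pairs2 = {p \<in> F r1 \<times> F r1. fst p - f0 \<noteq> snd p - f0}"
      have P2sub: "Pairs2 \<subseteq> E \<times> E" unfolding Pairs2_def F_def by blast
      have fP2: "finite Pairs2" using P2sub fE finite_subset by blast
      have cP2: "real (card Pairs2) \<le> real m^2"
      proof -
        have "card Pairs2 \<le> card (E \<times> E)" using P2sub fE by (intro card_mono) auto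
        then show ?thesis using cE by (metis of_nat_le_iff of_nat_power)
      qed
      have fV2: "finite (V - f0)" using fV by simp
      have pp2: "fst p - f0 \<subseteq> V - f0 \<and> snd p - f0 \<subseteq> V - f0 \<and> fst p - f0 \<noteq> snd p - f0 \<and>
           card ((fst p - f0) \<union> (snd p - f0)) \<le> 2*t
              \<and> 1 \<le> real (card (((fst p - f0) - (snd p - f0)) \<union> ((snd p - f0) - (fst p - f0))))" if p: "p \<in> Pairs2" for p
      proof -
        have pe: "fst p \<in> F r1" "snd p \<in> F r1" "fst p - f0 \<noteq> snd p - f0" using p unfolding Pairs2_def by auto
        have pE: "fst p \<in> E" "snd p \<in> E" using pe unfolding F_def by auto
        have "card ((fst p - f0) \<union> (snd p - f0)) \<le> card (fst p - f0) + card (snd p - f0)" by (rule card_Un_le)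
        then have c2: "card ((fst p - f0) \<union> (snd p - f0)) \<le> 2*t" using close[OF pe(1)] close[OF pe(2)] by linarith
        have ne: "((fst p - f0) - (snd p - f0)) \<union> ((snd p - f0) - (fst p - f0)) \<noteq> {}" using pe(3) by blast
        have "finite (((fst p - f0) - (snd p - f0)) \<union> ((snd p - f0) - (fst p - f0)))"
          using fin_e[OF pE(1)] fin_e[OF pE(2)] by blast
        then have "card (((fst p - f0) - (snd p - f0)) \<union> ((snd p - f0) - (fst p - f0))) \<ge> 1"
          using ne by (simp add: Suc_leI card_gt_0_iff)
        then show ?thesis using pe(3) c2 eV[OF pE(1)] eV[OF pE(2)] by auto
      qed
      have dl2: "0 < 1 * exp (-2) / real t" "1 * exp (-2) / real t \<le> 1"
      proof -
        show "0 < 1 * exp (-2) / real t" using t1 by simp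
        have "exp (-2) \<le> real t" using e2 t1 by linarith
        then show "1 * exp (-2) / real t \<le> 1" using t1 by simp
      qed
      obtain Ts2 where Ts2: "real (length Ts2) \<le> 2 * ln (real m) / (1 * exp (-2) / real t) + 1"
          "\<forall>T\<in>set Ts2. T \<subseteq> V - f0"
          "\<forall>p\<in>Pairs2. \<exists>T\<in>set Ts2. (T \<inter> (fst p - f0) \<noteq> {}) \<noteq> (T \<inter> (snd p - f0) \<noteq> {})"
        using design[where SA="\<lambda>p. fst p - f0" and SB="\<lambda>p. snd p - f0" and a=1 and r=t and V="V - f0" and Pairs=Pairs2, OF fV2 fP2 t1 m1 cP2 pp2 dl2]
        by blast
      define L where "L = map (\<lambda>x. {x}) (sorted_list_of_set f0) @ Ts2"
      have f0fin: "finite f0" using fin_e[OF f0E] .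
      have setL: "set L = (\<lambda>x. {x}) ` f0 \<union> set Ts2" unfolding L_def using f0fin by simp
      have lenL: "length L = card f0 + length Ts2" unfolding L_def by simp
      show ?thesis
      proof (intro exI[of _ L] conjI ballI impI)
        fix T assume "T \<in> set L" then show "T \<subseteq> V" using setL Ts2(2) eV[OF f0E] by auto
      next
        have "card f0 \<le> d" using cdE f0E by blast
        then show "real (length L) \<le> real d + (2 * ln (real m) / (1 * exp (-2) / real t) + 1)"
          using lenL Ts2(1) by simp
      next
        fix f g assume fg: "f \<in> F r1" "g \<in> F r1" and rr: "responses L f = responses L g"
        have A: "(x \<in> f) = (x \<in> g)" if "x \<in> f0" for x
        proof -
          have "{x} \<in> set L" using setL that by blast
          from resp_eq[OF rr this] show ?thesis by auto
        qed
        have B: "f - f0 = g - f0"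
        proof (rule ccontr)
          assume "f - f0 \<noteq> g - f0"
          then have "(f, g) \<in> Pairs2" using fg unfolding Pairs2_def by auto
          then obtain T where T: "T \<in> set Ts2" "(T \<inter> (f - f0) \<noteq> {}) \<noteq> (T \<inter> (g - f0) \<noteq> {})"
            using Ts2(3) by fastforce
          have "T \<inter> f0 = {}" using T(1) Ts2(2) by blast
          then have "T \<inter> (f - f0) = T \<inter> f" "T \<inter> (g - f0) = T \<inter> g" by blast+
          moreover have "T \<in> set L" using setL T(1) by blast
          ultimately show False using resp_eq[OF rr] T(2) by metis
        qed
        show "f = g" using A B by blast
      qed
    qed
  qed
  from choice[OF st2] obtain P2 where P2: "\<forall>r1. (\<forall>T\<in>set (P2 r1). T \<subseteq> V) \<and>
      real (length (P2 r1)) \<le> real d + (2 * ln (real m) / (1 * exp (-2) / real t) + 1)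
     \<and> (\<forall>f\<in>F r1. \<forall>g\<in>F r1. responses (P2 r1) f = responses (P2 r1) g \<longrightarrow> f = g)" by blast
  define P3 where "P3 = (\<lambda>(_::bool list) (_::bool list). ([]::nat set list))"
  have valid: "valid_three_stage n P1 P2 P3"
    unfolding valid_three_stage_def P3_def using P1(2) P2 unfolding V_def by auto
  have finds: "finds_defective E P1 P2 P3"
    unfolding finds_defective_def inj_on_def
  proof (intro ballI impI)
    fix e f assume ef: "e \<in> E" "f \<in> E" and oo: "outcome P1 P2 P3 e = outcome P1 P2 P3 f"
    have r1: "responses P1 e = responses P1 f" and
      r2: "responses (P2 (responses P1 e)) e = responses (P2 (responses P1 f)) f"
      using oo unfolding outcome_def Let_def by auto
    have "e \<in> F (responses P1 e)" "f \<in> F (responses P1 e)" using ef r1 unfolding F_def by auto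
    then show "e = f" using P2 r2 r1 by metis
  qed
  have each: "real (tests_used P1 P2 P3 e) \<le> (6 * exp 2 + 3) * (sqrt (real d) * log 2 (real m) + real d)" if "e \<in> E" for e
  proof -
    have tu: "tests_used P1 P2 P3 e = length P1 + length (P2 (responses P1 e))"
      unfolding tests_used_def P3_def Let_def by simp
    have lml: "ln (real m) \<le> log 2 (real m)"
    proof -
      have l2: "0 < ln (2::real)" "ln (2::real) \<le> 1" using ln_le_minus_one[of "2::real"] by auto
      have "ln (real m) * ln 2 \<le> ln (real m) * 1" using lnm l2 by (intro mult_left_mono) auto
      then show ?thesis using l2 by (simp add: log_def field_simps)
    qed
    have "real (length P1) + real (length (P2 (responses P1 e))) \<le> (6 * exp 2 + 3) * (sqrt (real d) * log 2 (real m) + real d)"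
      by (rule arith_final[OF d1 t_lo t_hi lnm lml P1(1)]) (use P2 in blast)
    then show ?thesis using tu by simp
  qed
  have "real (num_tests E P1 P2 P3) \<le> (6 * exp 2 + 3) * (sqrt (real d) * log 2 (real m) + real d)"
  proof -
    have "Max (tests_used P1 P2 P3 ` E) \<in> tests_used P1 P2 P3 ` E" using fE Ene by (intro Max_in) auto
    then obtain e where "e \<in> E" "num_tests E P1 P2 P3 = tests_used P1 P2 P3 e" unfolding num_tests_def by auto
    then show ?thesis using each by simp
  qed
  then show ?thesis using valid finds unfolding m_def by blast
qed

theorem corollary3:
  shows "\<exists>C>0. \<forall>(n::nat) (d::nat) (E::nat set set).
           n > 0 \<longrightarrow> d > 0 \<longrightarrow> E \<noteq> {} \<longrightarrow> E \<subseteq> Pow {1..n} \<longrightarrow>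
           (\<forall>e\<in>E. card e \<le> d) \<longrightarrow>
           (\<exists>P1 P2 P3. valid_three_stage n P1 P2 P3 \<and> finds_defective E P1 P2 P3 \<and>
              real (num_tests E P1 P2 P3)
                \<le> C * (sqrt (real d) * log 2 (real (card E)) + real d))"
proof (intro exI[of _ "6 * exp 2 + 3"] conjI allI impI)
  show "(0::real) < 6 * exp 2 + 3" by (simp add: add_pos_pos)
next
  fix n d :: nat and E :: "nat set set"
  assume "0 < d" "E \<noteq> {}" "E \<subseteq> Pow {1..n}" "\<forall>e\<in>E. card e \<le> d"
  then show "\<exists>P1 P2 P3. valid_three_stage n P1 P2 P3 \<and> finds_defective E P1 P2 P3 \<and>
              real (num_tests E P1 P2 P3) \<le> (6 * exp 2 + 3) * (sqrt (real d) * log 2 (real (card E)) + real d)"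
    by (rule main)
qed


end
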